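(* Let $N,M\ge 1$. Consider the coupled (single-topic) user–creator opinion dynamics $$\mathbf u^{t+1}=(I_N-\Lambda)A\,\mathbf u^{t}+\Lambda\,\mathbf u^{0}+(I_N-\Lambda)B\,\mathbf c^{t},\qquad \mathbf c^{t+1}=(I_M-\Gamma)E\,\mathbf c^{t}+\Gamma\,\mathbf c^{0}+(I_M-\Gamma)C\,\mathbf u^{t},\qquad t=0,1,2,\dots$$ with $\mathbf u^0\in[-1,1]^N$, $\mathbf c^0\in[-1,1]^M$ and with the matrices satisfying the standing assumptions described in the context (in particular, a static user partition). Then the users' opinions reach a steady state: there exists $\mathbf u^*\in\mathbb R^N$ such that $\lim_{t\to\infty}\mathbf u^t=\mathbf u^*$. Moreover, for every user $i\in\{1,\dots,N\}$, the influence of the social network on user $i$, namely $\sum_{j}A_{ij}$, and the influence of the recommended content on user $i$, namely $B_i:=\sum_{j}B_{ij}$, on $\mathbf u^*$ are complementary: $\sum_j A_{ij}+B_i=1$, so increasing one decreases the other.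
   Context: $\mathbf u^t=(u^t_1,\dots,u^t_N)^\top$ collects the opinions of $N$ users and $\mathbf c^t=(c^t_1,\dots,c^t_M)^\top$ those of $M$ content creators at time $t$. Standing assumptions: $\Lambda$ is an $N\times N$ diagonal matrix with diagonal entries $\lambda_i\in(0,1]$ (user stubbornness); $A\in[0,1]^{N\times N}$ is the (sub-stochastic) adjacency matrix of the users' social network, with nonzero diagonal entries ($A_{ij}>0$ means user $j$ influences user $i$). The user partition is static: each user $i$ is assigned to exactly one creator $j(i)$ (the set $\mathcal F_j$ of users consuming creator $j$ does not change over time). $B\in[0,1]^{N\times M}$ satisfies $B_{ij}=0$ whenever $j\neq j(i)$, and $[A\;B]\mathbf 1_{N+M}=\mathbf 1_N$, i.e. $\sum_j A_{ij}+\sum_j B_{ij}=1$ for each $i$. $\Gamma, E\in[0,1]^{M\times M}$ are diagonal matrices (creator stubbornness and creator self-influence), and $C\in[0,1]^{M\times N}$ satisfies $C_{ji}=0$ unless $i\in\mathcal F_j$, with $[E\;C]\mathbf 1_{M+N}=\mathbf 1_M$, i.e. $E_{jj}+\sum_i C_{ji}=1$ for each $j$. *)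

theory Defs
  imports "HOL-Analysis.Analysis"
begin

end

theory Submission
  imports Defs
begin

lemma diag_vec:
  fixes D :: "real^'n^'n"
  assumes "\<forall>i j. i \<noteq> j \<longrightarrow> D $ i $ j = 0"
  shows "(D *v v) $ i = D $ i $ i * v $ i"
proof -
  have "(D *v v) $ i = (\<Sum>j\<in>UNIV. D $ i $ j * v $ j)" by (simp add: matrix_vector_mult_def)
  also have "\<dots> = (\<Sum>j\<in>UNIV. if j = i then D $ i $ i * v $ i else 0)"
    by (rule sum.cong) (use assms in auto)
  finally show ?thesis by simp
qed

lemma diag_mult_vec:
  fixes D :: "real^'n^'n" and X :: "real^'m^'n"
  assumes "\<forall>i j. i \<noteq> j \<longrightarrow> D $ i $ j = 0"
  shows "(((mat 1 - D) ** X) *v v) $ i = (1 - D $ i $ i) * ((X *v v) $ i)"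
proof -
  have d: "\<forall>i j. i \<noteq> j \<longrightarrow> (mat 1 - D) $ i $ j = 0" using assms by (simp add: mat_def)
  have "((mat 1 - D) ** X) *v v = (mat 1 - D) *v (X *v v)" by (simp add: matrix_vector_mul_assoc)
  then show ?thesis using diag_vec[OF d] by (simp add: mat_def)
qed

lemma mv_diff: fixes X :: "real^'n^'m" shows "(X *v x) $ i - (X *v y) $ i = (\<Sum>j\<in>UNIV. X $ i $ j * (x $ j - y $ j))"
  by (simp add: matrix_vector_mult_def sum_subtractf[symmetric] right_diff_distrib)

lemma wsum_bound:
  fixes w x :: "'a \<Rightarrow> real"
  assumes "finite S" "\<And>j. j \<in> S \<Longrightarrow> 0 \<le> w j" "\<And>j. j \<in> S \<Longrightarrow> \<bar>x j\<bar> \<le> K"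
  shows "\<bar>\<Sum>j\<in>S. w j * x j\<bar> \<le> (\<Sum>j\<in>S. w j) * K"
proof -
  have "\<bar>\<Sum>j\<in>S. w j * x j\<bar> \<le> (\<Sum>j\<in>S. \<bar>w j * x j\<bar>)" by (rule sum_abs)
  also have "\<dots> \<le> (\<Sum>j\<in>S. w j * K)"
    by (rule sum_mono) (use assms in \<open>auto simp: abs_mult intro: mult_left_mono\<close>)
  also have "\<dots> = (\<Sum>j\<in>S. w j) * K" by (simp add: sum_distrib_right)
  finally show ?thesis .
qed

theorem theorem1:
  fixes Lam A :: "real^'n^'n" and B :: "real^'m^'n"
    and Gam E :: "real^'m^'m" and C :: "real^'n^'m"
    and jf :: "'n \<Rightarrow> 'm"
    and u :: "nat \<Rightarrow> real^'n" and c :: "nat \<Rightarrow> real^'m"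
  assumes Lam_diag: "\<forall>i j. i \<noteq> j \<longrightarrow> Lam $ i $ j = 0"
    and Lam_range: "\<forall>i. 0 < Lam $ i $ i \<and> Lam $ i $ i \<le> 1"
    and A_range: "\<forall>i j. 0 \<le> A $ i $ j \<and> A $ i $ j \<le> 1"
    and A_diag_pos: "\<forall>i. A $ i $ i \<noteq> 0"
    and B_range: "\<forall>i k. 0 \<le> B $ i $ k \<and> B $ i $ k \<le> 1"
    and B_partition: "\<forall>i k. k \<noteq> jf i \<longrightarrow> B $ i $ k = 0"
    and AB_stoch: "\<forall>i. (\<Sum>j\<in>UNIV. A $ i $ j) + (\<Sum>k\<in>UNIV. B $ i $ k) = 1"
    and Gam_diag: "\<forall>k l. k \<noteq> l \<longrightarrow> Gam $ k $ l = 0"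
    and Gam_range: "\<forall>k. 0 \<le> Gam $ k $ k \<and> Gam $ k $ k \<le> 1"
    and E_diag: "\<forall>k l. k \<noteq> l \<longrightarrow> E $ k $ l = 0"
    and E_range: "\<forall>k. 0 \<le> E $ k $ k \<and> E $ k $ k \<le> 1"
    and C_range: "\<forall>k i. 0 \<le> C $ k $ i \<and> C $ k $ i \<le> 1"
    and C_partition: "\<forall>k i. jf i \<noteq> k \<longrightarrow> C $ k $ i = 0"
    and EC_stoch: "\<forall>k. E $ k $ k + (\<Sum>i\<in>UNIV. C $ k $ i) = 1"
    and u0_range: "\<forall>i. \<bar>u 0 $ i\<bar> \<le> 1"
    and c0_range: "\<forall>k. \<bar>c 0 $ k\<bar> \<le> 1"
    and u_step: "\<forall>t. u (Suc t) = ((mat 1 - Lam) ** A) *v u t + Lam *v u 0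
                                   + ((mat 1 - Lam) ** B) *v c t"
    and c_step: "\<forall>t. c (Suc t) = ((mat 1 - Gam) ** E) *v c t + Gam *v c 0
                                   + ((mat 1 - Gam) ** C) *v u t"
  shows "(\<exists>ustar. u \<longlonglongrightarrow> ustar) \<and>
         (\<forall>i. (\<Sum>j\<in>UNIV. A $ i $ j) + (\<Sum>k\<in>UNIV. B $ i $ k) = 1)"
proof -
  define lam where "lam i = Lam $ i $ i" for i
  define gam where "gam k = Gam $ k $ k" for k
  define e where "e k = (1 - gam k) * E $ k $ k" for k
  define du where "du t i = u (Suc t) $ i - u t $ i" for t i
  define dc where "dc t k = c (Suc t) $ k - c t $ k" for t k
  have Ru: "du (Suc t) i = (1 - lam i) * ((\<Sum>j\<in>UNIV. A $ i $ j * du t j) + (\<Sum>k\<in>UNIV. B $ i $ k * dc t k))" for t i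
  proof -
    have comp: "u (Suc s) $ i = (1 - lam i) * (A *v u s) $ i + (Lam *v u 0) $ i + (1 - lam i) * (B *v c s) $ i" for s
    proof -
      have "u (Suc s) $ i = (((mat 1 - Lam) ** A) *v u s) $ i + (Lam *v u 0) $ i + (((mat 1 - Lam) ** B) *v c s) $ i"
        using u_step[rule_format, of s] by simp
      then show ?thesis by (simp only: diag_mult_vec[OF Lam_diag] lam_def)
    qed
    have "du (Suc t) i = (1 - lam i) * (((A *v u (Suc t)) $ i - (A *v u t) $ i) + ((B *v c (Suc t)) $ i - (B *v c t) $ i))"
      unfolding du_def comp[of "Suc t"] comp[of t] by (simp add: algebra_simps)
    then show ?thesis by (simp add: mv_diff du_def dc_def)
  qed
  have Rc: "dc (Suc t) k = (1 - gam k) * (E $ k $ k * dc t k + (\<Sum>i\<in>UNIV. C $ k $ i * du t i))" for t k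
  proof -
    have comp: "c (Suc s) $ k = (1 - gam k) * (E $ k $ k * c s $ k) + (Gam *v c 0) $ k + (1 - gam k) * (C *v u s) $ k" for s
    proof -
      have "c (Suc s) $ k = (((mat 1 - Gam) ** E) *v c s) $ k + (Gam *v c 0) $ k + (((mat 1 - Gam) ** C) *v u s) $ k"
        using c_step[rule_format, of s] by simp
      then show ?thesis by (simp only: diag_mult_vec[OF Gam_diag] diag_vec[OF E_diag] gam_def)
    qed
    have "dc (Suc t) k = (1 - gam k) * (E $ k $ k * dc t k + ((C *v u (Suc t)) $ k - (C *v u t) $ k))"
      unfolding dc_def comp[of "Suc t"] comp[of t] by (simp add: algebra_simps)
    then show ?thesis by (simp add: mv_diff du_def dc_def)
  qed
  have lam01: "0 < lam i" "lam i \<le> 1" for i using Lam_range lam_def by auto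
  have gam01: "0 \<le> gam k" "gam k \<le> 1" for k using Gam_range gam_def by auto
  have E01: "0 \<le> E $ k $ k" "E $ k $ k \<le> 1" for k using E_range by auto
  have e01: "0 \<le> e k" "e k \<le> 1" for k
    unfolding e_def using gam01[of k] E01[of k] by (auto intro: mult_le_one)
  define a where "a = Max (range (\<lambda>i. 1 - lam i))"
  have a_ge: "1 - lam i \<le> a" for i unfolding a_def by (rule Max_ge) auto
  have a_lt: "a < 1" unfolding a_def using lam01 by (subst Max_less_iff) auto
  have a_nn: "0 \<le> a" using a_ge[of undefined] lam01[of undefined] by linarith
  define S where "S = insert (1/2) (insert a ((\<lambda>k. e k + (1 - e k) * a) ` {k. e k < 1}))"
  define rho where "rho = Max S"
  have Sfin: "finite S" unfolding S_def by auto
  have rho_ge: "x \<in> S \<Longrightarrow> x \<le> rho" for x unfolding rho_def using Sfin by (rule Max_ge)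
  have rho_half: "1/2 \<le> rho" by (rule rho_ge) (simp add: S_def)
  have rho_a: "a \<le> rho" by (rule rho_ge) (simp add: S_def)
  have rho_k: "e k < 1 \<Longrightarrow> e k + (1 - e k) * a \<le> rho" for k by (rule rho_ge) (auto simp: S_def)
  have rho_lt: "rho < 1"
  proof -
    have "\<forall>x\<in>S. x < 1"
    proof
      fix x assume "x \<in> S"
      then consider "x = 1/2" | "x = a" | k where "e k < 1" "x = e k + (1 - e k) * a"
        unfolding S_def by auto
      then show "x < 1"
      proof cases
        case 3
        have "0 < (1 - e k) * (1 - a)" using 3 a_lt by simp
        then show ?thesis using 3 by (simp add: algebra_simps)
      qed (use a_lt in auto)
    qed
    then show ?thesis unfolding rho_def using Sfin by (subst Max_less_iff) (auto simp: S_def)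
  qed
  have rho_nn: "0 \<le> rho" using rho_half by simp
  have frozen: "dc t k = 0" if ek: "e k = 1" for t k
  proof -
    have E1: "E $ k $ k = 1"
    proof (rule ccontr)
      assume "E $ k $ k \<noteq> 1"
      then have "E $ k $ k < 1" using E01[of k] by simp
      moreover have "e k \<le> E $ k $ k" unfolding e_def using gam01[of k] E01[of k]
        by (simp add: mult_left_le_one_le)
      ultimately show False using ek by simp
    qed
    have g0: "gam k = 0" using ek E1 unfolding e_def by simp
    have "(\<Sum>i\<in>UNIV. C $ k $ i) = 0" using EC_stoch E1 by (metis add_cancel_right_right)
    then have C0: "C $ k $ i = 0" for i using C_range
      by (subst (asm) sum_nonneg_eq_0_iff) auto
    have c1: "c (Suc 0) $ k = c 0 $ k"
    proof -
      have "c (Suc 0) $ k = (((mat 1 - Gam) ** E) *v c 0) $ k + (Gam *v c 0) $ k + (((mat 1 - Gam) ** C) *v u 0) $ k"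
        using c_step[rule_format, of 0] by simp
      also have "\<dots> = (1 - gam k) * (E $ k $ k * c 0 $ k) + gam k * c 0 $ k + (1 - gam k) * (C *v u 0) $ k"
        by (simp only: diag_mult_vec[OF Gam_diag] diag_vec[OF E_diag] diag_vec[OF Gam_diag] gam_def)
      also have "\<dots> = c 0 $ k" using g0 E1 C0 by (simp add: matrix_vector_mult_def)
      finally show ?thesis .
    qed
    show ?thesis
    proof (induction t)
      case 0 then show ?case using c1 by (simp add: dc_def)
    next
      case (Suc t) then show ?case using Rc[of t k] g0 E1 C0 by simp
    qed
  qed
  have ustep: "\<bar>du (Suc t) i\<bar> \<le> a * K"
    if hu: "\<And>j. \<bar>du t j\<bar> \<le> K" and hc: "\<And>k. \<bar>dc t k\<bar> \<le> K" for t i K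
  proof -
    have K0: "0 \<le> K" using hu[of i] by linarith
    have "\<bar>\<Sum>j\<in>UNIV. A $ i $ j * du t j\<bar> \<le> (\<Sum>j\<in>UNIV. A $ i $ j) * K"
      by (rule wsum_bound) (use A_range hu in auto)
    moreover have "\<bar>\<Sum>k\<in>UNIV. B $ i $ k * dc t k\<bar> \<le> (\<Sum>k\<in>UNIV. B $ i $ k) * K"
      by (rule wsum_bound) (use B_range hc in auto)
    ultimately have "\<bar>(\<Sum>j\<in>UNIV. A $ i $ j * du t j) + (\<Sum>k\<in>UNIV. B $ i $ k * dc t k)\<bar> \<le> K"
    proof -
      have "(\<Sum>j\<in>UNIV. A $ i $ j) * K + (\<Sum>k\<in>UNIV. B $ i $ k) * K = K"
        using AB_stoch[rule_format, of i] by (metis distrib_right mult_1)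
      then show ?thesis using \<open>\<bar>\<Sum>j\<in>UNIV. A $ i $ j * du t j\<bar> \<le> _\<close> \<open>\<bar>\<Sum>k\<in>UNIV. B $ i $ k * dc t k\<bar> \<le> _\<close>
        by (smt (verit) abs_triangle_ineq)
    qed
    then have "\<bar>du (Suc t) i\<bar> \<le> (1 - lam i) * K"
      unfolding Ru using lam01[of i] by (simp add: abs_mult mult_left_mono)
    also have "\<dots> \<le> a * K" using a_ge[of i] K0 by (simp add: mult_right_mono)
    finally show ?thesis .
  qed
  have cstep: "\<bar>dc (Suc t) k\<bar> \<le> e k * X + (1 - e k) * Y"
    if hx: "\<bar>dc t k\<bar> \<le> X" and hy: "\<And>i. \<bar>du t i\<bar> \<le> Y" for t k X Y
  proof -
    have Y0: "0 \<le> Y" using hy[of undefined] by linarith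
    have s: "\<bar>\<Sum>i\<in>UNIV. C $ k $ i * du t i\<bar> \<le> (\<Sum>i\<in>UNIV. C $ k $ i) * Y"
      by (rule wsum_bound) (use C_range hy in auto)
    have sC: "(\<Sum>i\<in>UNIV. C $ k $ i) = 1 - E $ k $ k" using EC_stoch by (simp add: algebra_simps)
    have "\<bar>E $ k $ k * dc t k + (\<Sum>i\<in>UNIV. C $ k $ i * du t i)\<bar> \<le> E $ k $ k * X + (1 - E $ k $ k) * Y"
    proof -
      have "\<bar>E $ k $ k * dc t k\<bar> \<le> E $ k $ k * X" using E01[of k] hx by (simp add: abs_mult mult_left_mono)
      then show ?thesis using s sC by (smt (verit) abs_triangle_ineq)
    qed
    then have "\<bar>dc (Suc t) k\<bar> \<le> (1 - gam k) * (E $ k $ k * X + (1 - E $ k $ k) * Y)"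
      unfolding Rc using gam01[of k] by (simp add: abs_mult mult_left_mono)
    also have "\<dots> = e k * X + (1 - gam k) * (1 - E $ k $ k) * Y" by (simp add: e_def algebra_simps)
    also have "\<dots> \<le> e k * X + (1 - e k) * Y"
    proof -
      have "(1 - gam k) * (1 - E $ k $ k) \<le> 1 - e k" unfolding e_def using gam01[of k] E01[of k]
        by (simp add: algebra_simps)
      then show ?thesis using Y0 by (simp add: mult_right_mono)
    qed
    finally show ?thesis .
  qed
  define M where "M = (\<Sum>i\<in>UNIV. \<bar>du 0 i\<bar>) + (\<Sum>k\<in>UNIV. \<bar>dc 0 k\<bar>) + (\<Sum>i\<in>UNIV. \<bar>du 1 i\<bar>) + (\<Sum>k\<in>UNIV. \<bar>dc 1 k\<bar>)"
  define K where "K t = M * rho ^ (t div 2)" for t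
  have le_sum: "\<bar>f x\<bar> \<le> (\<Sum>y\<in>UNIV. \<bar>f y\<bar>)" for f :: "'z::finite \<Rightarrow> real" and x
    by (rule member_le_sum) auto
  have M0: "0 \<le> M" unfolding M_def by (simp add: sum_nonneg)
  have K_mono: "K (Suc t) \<le> K t" for t
    unfolding K_def using M0 rho_nn rho_lt
    by (intro mult_left_mono power_decreasing) auto
  have K_SS: "K (Suc (Suc t)) = rho * K t" for t unfolding K_def by simp
  have K_nn: "0 \<le> K t" for t unfolding K_def using M0 rho_nn by simp
  define Q where "Q t \<longleftrightarrow> (\<forall>i. \<bar>du t i\<bar> \<le> K t) \<and> (\<forall>k. \<bar>dc t k\<bar> \<le> K t)" for t
  have QQ: "Q t \<and> Q (Suc t)" for t
  proof (induction t)
    case 0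
    have "\<bar>du 0 i\<bar> \<le> M" "\<bar>dc 0 k\<bar> \<le> M" "\<bar>du 1 i\<bar> \<le> M" "\<bar>dc 1 k\<bar> \<le> M" for i k
      unfolding M_def using le_sum[of "du 0" i] le_sum[of "dc 0" k] le_sum[of "du 1" i] le_sum[of "dc 1" k]
      by (auto simp: sum_nonneg intro: add_increasing add_increasing2)
    then show ?case by (simp add: Q_def K_def)
  next
    case (Suc t)
    then have Qt: "Q t" and Qs: "Q (Suc t)" by auto
    have "Q (Suc (Suc t))" unfolding Q_def
    proof (intro conjI allI)
      fix i
      have "\<bar>du (Suc (Suc t)) i\<bar> \<le> a * K (Suc t)" by (rule ustep) (use Qs Q_def in auto)
      also have "\<dots> \<le> rho * K t" using rho_a K_mono[of t] a_nn K_nn[of "Suc t"]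
        by (intro mult_mono) auto
      finally show "\<bar>du (Suc (Suc t)) i\<bar> \<le> K (Suc (Suc t))" by (simp add: K_SS)
    next
      fix k
      show "\<bar>dc (Suc (Suc t)) k\<bar> \<le> K (Suc (Suc t))"
      proof (cases "e k = 1")
        case True then show ?thesis using frozen K_nn by simp
      next
        case False
        then have ek: "e k < 1" using e01[of k] by simp
        have hy: "\<bar>du (Suc t) i\<bar> \<le> a * K t" for i by (rule ustep) (use Qt Q_def in auto)
        have "\<bar>dc (Suc (Suc t)) k\<bar> \<le> e k * K (Suc t) + (1 - e k) * (a * K t)"
          by (rule cstep) (use Qs Q_def hy in auto)
        also have "\<dots> \<le> e k * K t + (1 - e k) * (a * K t)"
          using e01[of k] K_mono[of t] by (simp add: mult_left_mono)
        also have "\<dots> = (e k + (1 - e k) * a) * K t" by (simp add: algebra_simps)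
        also have "\<dots> \<le> rho * K t" using rho_k[OF ek] K_nn[of t] by (simp add: mult_right_mono)
        finally show ?thesis by (simp add: K_SS)
      qed
    qed
    then show ?case using Qs by simp
  qed
  define r where "r = sqrt rho"
  have r_pos: "0 < r" and r_le: "r < 1" unfolding r_def using rho_half rho_lt by auto
  have rho_r: "rho ^ (t div 2) \<le> r ^ t / r" for t
  proof -
    have "rho ^ (t div 2) * r = r ^ (2 * (t div 2) + 1)"
      unfolding r_def using rho_nn by (simp add: power_mult)
    also have "\<dots> \<le> r ^ t" using r_pos r_le by (intro power_decreasing) auto
    finally show ?thesis using r_pos by (simp add: field_simps)
  qed
  have summ: "summable (\<lambda>t. du t i)" for i
  proof (rule summable_comparison_test)
    show "\<exists>N. \<forall>n\<ge>N. norm (du n i) \<le> M / r * r ^ n"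
    proof (intro exI allI impI)
      fix n
      have "\<bar>du n i\<bar> \<le> M * rho ^ (n div 2)" using QQ[of n] by (simp add: Q_def K_def)
      also have "\<dots> \<le> M * (r ^ n / r)" using rho_r[of n] M0 by (rule mult_left_mono)
      finally show "norm (du n i) \<le> M / r * r ^ n" by simp
    qed
    show "summable (\<lambda>n. M / r * r ^ n)" using r_pos r_le
      by (intro summable_mult summable_geometric) simp
  qed
  have conv: "(\<lambda>t. u t $ i) \<longlonglongrightarrow> u 0 $ i + suminf (\<lambda>s. du s i)" for i
  proof -
    have eq: "u t $ i = u 0 $ i + (\<Sum>s<t. du s i)" for t
      unfolding du_def using sum_lessThan_telescope[of "\<lambda>s. u s $ i" t] by simp
    have feq: "(\<lambda>t. u t $ i) = (\<lambda>t. u 0 $ i + (\<Sum>s<t. du s i))" by (rule ext) (rule eq)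
    show ?thesis unfolding feq by (intro tendsto_add tendsto_const summable_LIMSEQ summ)
  qed
  have "u \<longlonglongrightarrow> (\<chi> i. u 0 $ i + suminf (\<lambda>s. du s i))"
    by (rule vec_tendstoI) (simp add: conv)
  then show ?thesis using AB_stoch by blast
qed

end
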